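(* Let $\mathcal{S}\subseteq\mathcal{L}$ and let $\mathcal{AF}_{\vdash}=(\vdash,\overline{\cdot},\mathsf{id})$ be contrapositable with $\vdash$ satisfying Cut. Then the stable extensions of $\mathcal{AF}_{\mathsf{con}}(\mathcal{S})$ coincide with its preferred extensions.
   Context: $\mathcal{L}$ is a set of formulas; ${\vdash}\subseteq\wp_{\sf fin}(\mathcal{L})\times\mathcal{L}$ is arbitrary and $\overline{\cdot}:\mathcal{L}\to\wp(\mathcal{L})$. $\mathit{Arg}_{\vdash'}(\mathcal{S})=\{(\Gamma,\gamma):\Gamma\subseteq\mathcal{S}\text{ finite},\Gamma\vdash'\gamma\}$; in $\mathcal{AF}_{\vdash'}(\mathcal{S})$, $(\Gamma,\gamma)$ attacks $(\Gamma',\gamma')$ iff $\gamma\in\overline{\lambda}$ for some $\lambda\in\Gamma'$. Complete = conflict-free, defends every member (every attacker of a member is attacked by a member), contains every argument it defends; preferred = $\subseteq$-maximal complete; stable = admissible (conflict-free and defends its members) and attacks every argument not in it. $\vdash^{+\phi}$ is the transitive closure of ${\vdash}\cup\{(\emptyset,\phi)\}$; Cut: for every $\phi$ and finite $\Gamma,\Delta$, if $\Gamma\vdash\phi$ and $\Delta\vdash^{+\phi}\gamma$ then $\Gamma\cup\Delta\vdash\gamma$. Contrapositable: for all finite $\Theta$, if $\Theta\vdash\gamma'$ with $\gamma'\in\overline{\gamma}$, then for every $\sigma\in\Theta$, $(\Theta\cup\{\gamma\})\setminus\{\sigma\}\vdash\sigma'$ for some $\sigma'\in\overline{\sigma}$.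 $\Theta\subseteq\mathcal{S}$ is $\mathcal{AF}_{\vdash}(\mathcal{S})$-inconsistent iff there are $\Theta'\subseteq\Theta$ and $\gamma\in\Theta'$ with $\Theta'\setminus\{\gamma\}\vdash\gamma'$ for some $\gamma'\in\overline{\gamma}$, consistent otherwise. $\vdash_{\mathsf{con}}=\{(\Gamma,\gamma):\Gamma\vdash\gamma,\ \Gamma\text{ consistent}\}$ and $\mathcal{AF}_{\mathsf{con}}(\mathcal{S})=\mathcal{AF}_{\vdash_{\mathsf{con}}}(\mathcal{S})$. *)

theory Defs
  imports Main
begin

(* A derivability relation  |- \<subseteq> \<wp>_fin(L) \<times> L  is modelled as a predicate
   vd :: 'f set \<Rightarrow> 'f \<Rightarrow> bool, only ever consulted on finite premise sets. *)

type_synonym 'f drel = "'f set \<Rightarrow> 'f \<Rightarrow> bool"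
type_synonym 'f arg = "'f set \<times> 'f"

definition Arg :: "'f drel \<Rightarrow> 'f set \<Rightarrow> 'f arg set" where
  "Arg vd S = {(\<Gamma>, \<gamma>). finite \<Gamma> \<and> \<Gamma> \<subseteq> S \<and> vd \<Gamma> \<gamma>}"

definition attacks :: "('f \<Rightarrow> 'f set) \<Rightarrow> 'f arg \<Rightarrow> 'f arg \<Rightarrow> bool" where
  "attacks contr a b \<longleftrightarrow> (\<exists>l\<in>fst b. snd a \<in> contr l)"

definition conflict_free :: "'a set \<Rightarrow> ('a \<Rightarrow> 'a \<Rightarrow> bool) \<Rightarrow> 'a set \<Rightarrow> bool" where
  "conflict_free A att E \<longleftrightarrow> E \<subseteq> A \<and> (\<forall>a\<in>E. \<forall>b\<in>E. \<not> att a b)"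

definition defends :: "'a set \<Rightarrow> ('a \<Rightarrow> 'a \<Rightarrow> bool) \<Rightarrow> 'a set \<Rightarrow> 'a \<Rightarrow> bool" where
  "defends A att E a \<longleftrightarrow> (\<forall>b\<in>A. att b a \<longrightarrow> (\<exists>c\<in>E. att c b))"

definition admissible :: "'a set \<Rightarrow> ('a \<Rightarrow> 'a \<Rightarrow> bool) \<Rightarrow> 'a set \<Rightarrow> bool" where
  "admissible A att E \<longleftrightarrow> conflict_free A att E \<and> (\<forall>a\<in>E. defends A att E a)"

definition complete_ext :: "'a set \<Rightarrow> ('a \<Rightarrow> 'a \<Rightarrow> bool) \<Rightarrow> 'a set \<Rightarrow> bool" where
  "complete_ext A att E \<longleftrightarrow> admissible A att E \<and> (\<forall>a\<in>A. defends A att E a \<longrightarrow> a \<in> E)"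

definition preferred_ext :: "'a set \<Rightarrow> ('a \<Rightarrow> 'a \<Rightarrow> bool) \<Rightarrow> 'a set \<Rightarrow> bool" where
  "preferred_ext A att E \<longleftrightarrow> complete_ext A att E \<and>
     (\<forall>E'. complete_ext A att E' \<and> E \<subseteq> E' \<longrightarrow> E' = E)"

definition stable_ext :: "'a set \<Rightarrow> ('a \<Rightarrow> 'a \<Rightarrow> bool) \<Rightarrow> 'a set \<Rightarrow> bool" where
  "stable_ext A att E \<longleftrightarrow> admissible A att E \<and> (\<forall>b\<in>A - E. \<exists>a\<in>E. att a b)"

inductive plus_drel :: "'f drel \<Rightarrow> 'f \<Rightarrow> 'f set \<Rightarrow> 'f \<Rightarrow> bool" for vd \<phi> where
  base: "finite \<Gamma> \<Longrightarrow> vd \<Gamma> \<gamma> \<Longrightarrow> plus_drel vd \<phi> \<Gamma> \<gamma>"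
| ax: "plus_drel vd \<phi> {} \<phi>"
| trans: "plus_drel vd \<phi> \<Gamma> \<delta> \<Longrightarrow> plus_drel vd \<phi> \<Delta> \<gamma> \<Longrightarrow> \<delta> \<in> \<Delta> \<Longrightarrow>
          plus_drel vd \<phi> (\<Gamma> \<union> (\<Delta> - {\<delta>})) \<gamma>"

definition cut_prop :: "'f drel \<Rightarrow> bool" where
  "cut_prop vd \<longleftrightarrow> (\<forall>\<phi> \<Gamma> \<Delta> \<gamma>. finite \<Gamma> \<and> finite \<Delta> \<and> vd \<Gamma> \<phi> \<and> plus_drel vd \<phi> \<Delta> \<gamma>
      \<longrightarrow> vd (\<Gamma> \<union> \<Delta>) \<gamma>)"

definition contrapositable :: "'f drel \<Rightarrow> ('f \<Rightarrow> 'f set) \<Rightarrow> bool" where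
  "contrapositable vd contr \<longleftrightarrow> (\<forall>\<Theta> \<gamma> \<gamma>'. finite \<Theta> \<and> vd \<Theta> \<gamma>' \<and> \<gamma>' \<in> contr \<gamma> \<longrightarrow>
      (\<forall>\<sigma>\<in>\<Theta>. \<exists>\<sigma>'\<in>contr \<sigma>. vd ((\<Theta> \<union> {\<gamma>}) - {\<sigma>}) \<sigma>'))"

definition inconsistent :: "'f drel \<Rightarrow> ('f \<Rightarrow> 'f set) \<Rightarrow> 'f set \<Rightarrow> bool" where
  "inconsistent vd contr \<Theta> \<longleftrightarrow> (\<exists>\<Theta>' \<gamma>. \<Theta>' \<subseteq> \<Theta> \<and> finite \<Theta>' \<and> \<gamma> \<in> \<Theta>' \<and>
      (\<exists>\<gamma>'\<in>contr \<gamma>. vd (\<Theta>' - {\<gamma>}) \<gamma>'))"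

definition vd_con :: "'f drel \<Rightarrow> ('f \<Rightarrow> 'f set) \<Rightarrow> 'f drel" where
  "vd_con vd contr \<Gamma> \<gamma> \<longleftrightarrow> vd \<Gamma> \<gamma> \<and> \<not> inconsistent vd contr \<Gamma>"

end

theory Submission
  imports Defs
begin

lemma inc_mono: "inconsistent vd contr A \<Longrightarrow> A \<subseteq> B \<Longrightarrow> inconsistent vd contr B"
  unfolding inconsistent_def by blast

lemma Arg_memD: "a \<in> Arg vd S \<Longrightarrow> finite (fst a) \<and> fst a \<subseteq> S \<and> vd (fst a) (snd a)"
  by (cases a) (auto simp: Arg_def)

lemma Arg_memI: "finite G \<Longrightarrow> G \<subseteq> S \<Longrightarrow> vd G g \<Longrightarrow> (G, g) \<in> Arg vd S"
  by (auto simp: Arg_def)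

lemma incI: "\<Theta>' \<subseteq> \<Theta> \<Longrightarrow> finite \<Theta>' \<Longrightarrow> g \<in> \<Theta>' \<Longrightarrow> g' \<in> contr g \<Longrightarrow> vd (\<Theta>' - {g}) g'
   \<Longrightarrow> inconsistent vd contr \<Theta>"
  unfolding inconsistent_def by blast

lemma contrD: "contrapositable vd contr \<Longrightarrow> finite \<Theta> \<Longrightarrow> vd \<Theta> \<gamma>' \<Longrightarrow> \<gamma>' \<in> contr \<gamma> \<Longrightarrow> \<sigma> \<in> \<Theta>
   \<Longrightarrow> \<exists>\<sigma>'\<in>contr \<sigma>. vd ((\<Theta> \<union> {\<gamma>}) - {\<sigma>}) \<sigma>'"
  unfolding contrapositable_def by blast

lemma stable_preferred:
  assumes "stable_ext A att E"
  shows "preferred_ext A att E"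
proof -
  from assms have adm: "admissible A att E" and st: "\<forall>b\<in>A - E. \<exists>a\<in>E. att a b"
    by (auto simp: stable_ext_def)
  hence cf: "E \<subseteq> A" "\<forall>a\<in>E. \<forall>b\<in>E. \<not> att a b"
    by (auto simp: admissible_def conflict_free_def)
  have comp: "complete_ext A att E"
    unfolding complete_ext_def
  proof (intro conjI adm ballI impI)
    fix a assume a: "a \<in> A" "defends A att E a"
    show "a \<in> E"
    proof (rule ccontr)
      assume "a \<notin> E"
      with st a obtain e where e: "e \<in> E" "att e a" by blast
      with a cf obtain c where "c \<in> E" "att c e" unfolding defends_def by blast
      with e cf show False by blast
    qed
  qed
  show ?thesis unfolding preferred_ext_def
  proof (intro conjI comp allI impI)
    fix E' assume h: "complete_ext A att E' \<and> E \<subseteq> E'"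
    hence cf': "E' \<subseteq> A" "\<forall>a\<in>E'. \<forall>b\<in>E'. \<not> att a b"
      by (auto simp: complete_ext_def admissible_def conflict_free_def)
    show "E' = E"
    proof (rule ccontr)
      assume "E' \<noteq> E"
      with h obtain x where "x \<in> E'" "x \<notin> E" by blast
      with cf' st obtain e where "e \<in> E" "att e x" by blast
      with h cf' \<open>x \<in> E'\<close> show False by blast
    qed
  qed
qed

lemma prem_consistent:
  assumes pref: "preferred_ext (Arg (vd_con vd contr) S) (attacks contr) E"
  shows "\<not> inconsistent vd contr (\<Union>(fst ` E))"
proof
  let ?P = "\<Union>(fst ` E)"
  let ?AC = "Arg (vd_con vd contr) S"
  have adm: "admissible ?AC (attacks contr) E" using pref
    by (simp add: preferred_ext_def complete_ext_def)
  hence EA: "E \<subseteq> ?AC" and cf: "\<forall>a\<in>E. \<forall>b\<in>E. \<not> attacks contr a b"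
    and def: "\<forall>a\<in>E. defends ?AC (attacks contr) E a"
    by (auto simp: admissible_def conflict_free_def)
  have PS: "?P \<subseteq> S" using EA Arg_memD by blast
  define W where "W = {\<Theta>. \<Theta> \<subseteq> ?P \<and> finite \<Theta> \<and> (\<exists>g\<in>\<Theta>. \<exists>g'\<in>contr g. vd (\<Theta> - {g}) g')}"
  assume "inconsistent vd contr ?P"
  hence ex: "\<exists>n. \<exists>\<Theta>\<in>W. card \<Theta> = n" unfolding W_def inconsistent_def by blast
  define n where "n = (LEAST n. \<exists>\<Theta>\<in>W. card \<Theta> = n)"
  from LeastI_ex[OF ex] obtain \<Theta> where T: "\<Theta> \<in> W" "card \<Theta> = n" unfolding n_def by blast
  then obtain g g' where g: "g \<in> \<Theta>" "g' \<in> contr g" "vd (\<Theta> - {g}) g'" and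
    fin: "finite \<Theta>" and sub: "\<Theta> \<subseteq> ?P" unfolding W_def by blast
  have cons: "\<not> inconsistent vd contr (\<Theta> - {g})"
  proof
    assume "inconsistent vd contr (\<Theta> - {g})"
    then obtain \<Theta>3 where t3: "\<Theta>3 \<subseteq> \<Theta> - {g}" "finite \<Theta>3"
      "\<exists>h\<in>\<Theta>3. \<exists>h'\<in>contr h. vd (\<Theta>3 - {h}) h'" unfolding inconsistent_def by blast
    hence "\<Theta>3 \<in> W" using sub unfolding W_def by blast
    hence "n \<le> card \<Theta>3" unfolding n_def by (intro Least_le) blast
    moreover have "card \<Theta>3 < card \<Theta>"
      using t3 g(1) fin by (intro psubset_card_mono) auto
    ultimately show False using T by simp
  qed
  let ?b = "(\<Theta> - {g}, g')"
  have "\<Theta> - {g} \<subseteq> S" using sub PS by blast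
  hence bA: "?b \<in> ?AC" using fin g cons unfolding vd_con_def by (intro Arg_memI) auto
  from g(1) sub obtain e where e: "e \<in> E" "g \<in> fst e" by blast
  have "attacks contr ?b e" using e g by (auto simp: attacks_def)
  with def e bA obtain c where c: "c \<in> E" "attacks contr c ?b" unfolding defends_def by blast
  then obtain l where l: "l \<in> \<Theta> - {g}" "snd c \<in> contr l" by (auto simp: attacks_def)
  with sub obtain e2 where "e2 \<in> E" "l \<in> fst e2" by blast
  hence "attacks contr c e2" using l(2) unfolding attacks_def by blast
  with c \<open>e2 \<in> E\<close> cf show False by blast
qed

lemma max_consistent:
  assumes "P \<subseteq> S" "\<not> inconsistent vd contr P"
  shows "\<exists>T. P \<subseteq> T \<and> T \<subseteq> S \<and> \<not> inconsistent vd contr T \<and>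
     (\<forall>T'. T \<subseteq> T' \<and> T' \<subseteq> S \<and> \<not> inconsistent vd contr T' \<longrightarrow> T' = T)"
proof -
  let ?A = "{T. P \<subseteq> T \<and> T \<subseteq> S \<and> \<not> inconsistent vd contr T}"
  have "\<exists>M\<in>?A. \<forall>X\<in>?A. M \<subseteq> X \<longrightarrow> X = M"
  proof (rule Zorn_Lemma2, rule ballI)
    fix C assume C: "C \<in> chains ?A"
    show "\<exists>U\<in>?A. \<forall>X\<in>C. X \<subseteq> U"
    proof (cases "C = {}")
      case True
      have "P \<in> ?A" using assms by blast
      thus ?thesis using True by blast
    next
      case False
      have CA: "C \<subseteq> ?A" using C by (rule chainsD2)
      have ch: "subset.chain ?A C" using C by (simp add: chains_alt_def)
      have "\<not> inconsistent vd contr (\<Union>C)"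
      proof
        assume "inconsistent vd contr (\<Union>C)"
        then obtain \<Theta>' where t: "\<Theta>' \<subseteq> \<Union>C" "finite \<Theta>'"
          "\<exists>h\<in>\<Theta>'. \<exists>h'\<in>contr h. vd (\<Theta>' - {h}) h'" unfolding inconsistent_def by blast
        obtain B where "B \<in> C" "\<Theta>' \<subseteq> B"
          using finite_subset_Union_chain[OF t(2) t(1) False ch] by blast
        hence "inconsistent vd contr B" using t unfolding inconsistent_def by blast
        with \<open>B \<in> C\<close> CA show False by blast
      qed
      moreover obtain X0 where "X0 \<in> C" using False by blast
      hence "P \<subseteq> \<Union>C" using CA by blast
      moreover have "\<Union>C \<subseteq> S" using CA by blast
      ultimately have "\<Union>C \<in> ?A" by simp
      moreover have "\<forall>X\<in>C. X \<subseteq> \<Union>C" by (simp add: Union_upper)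
      ultimately show ?thesis by (rule bexI[rotated])
    qed
  qed
  then obtain M where M: "M \<in> ?A" and mx: "\<forall>X\<in>?A. M \<subseteq> X \<longrightarrow> X = M" by blast
  show ?thesis
  proof (intro exI[of _ M] conjI allI impI)
    show "P \<subseteq> M" "M \<subseteq> S" "\<not> inconsistent vd contr M" using M by simp_all
  next
    fix T' assume h: "M \<subseteq> T' \<and> T' \<subseteq> S \<and> \<not> inconsistent vd contr T'"
    hence "T' \<in> ?A" using M by auto
    thus "T' = M" using mx h by blast
  qed
qed

lemma argT_stable:
  assumes cp: "contrapositable vd contr"
    and T: "T \<subseteq> S" "\<not> inconsistent vd contr T"
    and mx: "\<forall>T'. T \<subseteq> T' \<and> T' \<subseteq> S \<and> \<not> inconsistent vd contr T' \<longrightarrow> T' = T"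
  shows "stable_ext (Arg (vd_con vd contr) S) (attacks contr)
           {a \<in> Arg (vd_con vd contr) S. fst a \<subseteq> T}"
proof -
  let ?AC = "Arg (vd_con vd contr) S"
  let ?E = "{a \<in> ?AC. fst a \<subseteq> T}"
  have cf: "\<forall>a\<in>?E. \<forall>b\<in>?E. \<not> attacks contr a b"
  proof (intro ballI notI)
    fix a b assume a: "a \<in> ?E" and b: "b \<in> ?E" and att: "attacks contr a b"
    obtain \<Theta>1 \<delta> where ad: "a = (\<Theta>1, \<delta>)" by (cases a)
    from att obtain l where l: "l \<in> fst b" "\<delta> \<in> contr l" using ad by (auto simp: attacks_def)
    have a1: "finite \<Theta>1" "vd \<Theta>1 \<delta>" "\<not> inconsistent vd contr \<Theta>1" "\<Theta>1 \<subseteq> T"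
      using a ad by (auto simp: Arg_def vd_con_def)
    have lT: "l \<in> T" using b l by auto
    show False
    proof (cases "l \<in> \<Theta>1")
      case True
      from contrD[OF cp a1(1) a1(2) l(2) True] obtain s' where "s' \<in> contr l" "vd ((\<Theta>1 \<union> {l}) - {l}) s'"
        by blast
      moreover have "(\<Theta>1 \<union> {l}) - {l} = \<Theta>1 - {l}" by blast
      ultimately have "inconsistent vd contr \<Theta>1" using True a1
        by (intro incI[of \<Theta>1 \<Theta>1 l s']) auto
      with a1 show False by blast
    next
      case False
      moreover have "(\<Theta>1 \<union> {l}) - {l} = \<Theta>1" using False by blast
      ultimately have "inconsistent vd contr (\<Theta>1 \<union> {l})" using a1 l
        by (intro incI[of "\<Theta>1 \<union> {l}" _ l \<delta>]) auto
      moreover have "\<Theta>1 \<union> {l} \<subseteq> T" using a1 lT by blast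
      ultimately show False using T inc_mono by blast
    qed
  qed
  have st: "\<forall>b\<in>?AC - ?E. \<exists>a\<in>?E. attacks contr a b"
  proof
    fix b assume b: "b \<in> ?AC - ?E"
    then obtain lm where lam: "lm \<in> fst b" "lm \<notin> T" by auto
    have lS: "lm \<in> S" using b lam by (auto simp: Arg_def)
    have "inconsistent vd contr (insert lm T)"
    proof (rule ccontr)
      assume "\<not> inconsistent vd contr (insert lm T)"
      moreover from mx have "T \<subseteq> insert lm T \<and> insert lm T \<subseteq> S \<and> \<not> inconsistent vd contr (insert lm T) \<longrightarrow> insert lm T = T" by (rule spec)
      ultimately have "insert lm T = T" using lS T by blast
      with lam show False by blast
    qed
    then obtain \<Theta>' g g' where w: "\<Theta>' \<subseteq> insert lm T" "finite \<Theta>'" "g \<in> \<Theta>'" "g' \<in> contr g"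
      "vd (\<Theta>' - {g}) g'" unfolding inconsistent_def by blast
    have "lm \<in> \<Theta>'"
    proof (rule ccontr)
      assume "lm \<notin> \<Theta>'"
      hence "\<Theta>' \<subseteq> T" using w by blast
      hence "inconsistent vd contr T" using w unfolding inconsistent_def by blast
      with T show False by blast
    qed
    have "\<exists>l'\<in>contr lm. vd (\<Theta>' - {lm}) l'"
    proof (cases "g = lm")
      case True thus ?thesis using w by blast
    next
      case False
      hence "lm \<in> \<Theta>' - {g}" using \<open>lm \<in> \<Theta>'\<close> by blast
      from contrD[OF cp _ w(5) w(4) this] w(2) obtain s' where "s' \<in> contr lm" "vd ((\<Theta>' - {g}) \<union> {g} - {lm}) s'"
        by blast
      moreover have "(\<Theta>' - {g}) \<union> {g} - {lm} = \<Theta>' - {lm}" using w(3) False by blast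
      ultimately show ?thesis by auto
    qed
    then obtain l' where l': "l' \<in> contr lm" "vd (\<Theta>' - {lm}) l'" by blast
    have sub: "\<Theta>' - {lm} \<subseteq> T" using w by blast
    have "\<not> inconsistent vd contr (\<Theta>' - {lm})" using sub T inc_mono by blast
    moreover have "\<Theta>' - {lm} \<subseteq> S" using sub T by blast
    ultimately have "(\<Theta>' - {lm}, l') \<in> ?AC" using w l' unfolding vd_con_def by (intro Arg_memI) auto
    hence "(\<Theta>' - {lm}, l') \<in> ?E" using sub by simp
    moreover have "attacks contr (\<Theta>' - {lm}, l') b" using lam l' by (auto simp: attacks_def)
    ultimately show "\<exists>a\<in>?E. attacks contr a b" by blast
  qed
  have adm: "admissible ?AC (attacks contr) ?E"
    unfolding admissible_def conflict_free_def defends_def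
  proof (intro conjI ballI impI)
    show "?E \<subseteq> ?AC" by blast
  next
    fix a b assume "a \<in> ?E" "b \<in> ?E" thus "\<not> attacks contr a b" using cf by blast
  next
    fix a b assume "a \<in> ?E" "b \<in> ?AC" "attacks contr b a"
    hence "b \<notin> ?E" using cf by blast
    thus "\<exists>c\<in>?E. attacks contr c b" using st \<open>b \<in> ?AC\<close> by blast
  qed
  show ?thesis unfolding stable_ext_def using adm st by blast
qed

theorem corollary2:
  fixes vd :: "'f set \<Rightarrow> 'f \<Rightarrow> bool" and contr :: "'f \<Rightarrow> 'f set" and S :: "'f set"
  assumes "contrapositable vd contr" and "cut_prop vd"
  shows "{E. stable_ext (Arg (vd_con vd contr) S) (attacks contr) E}
       = {E. preferred_ext (Arg (vd_con vd contr) S) (attacks contr) E}"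
proof (intro equalityI subsetI; simp)
  fix E assume "stable_ext (Arg (vd_con vd contr) S) (attacks contr) E"
  thus "preferred_ext (Arg (vd_con vd contr) S) (attacks contr) E" by (rule stable_preferred)
next
  fix E assume pref: "preferred_ext (Arg (vd_con vd contr) S) (attacks contr) E"
  let ?AC = "Arg (vd_con vd contr) S"
  let ?P = "\<Union>(fst ` E)"
  have EA: "E \<subseteq> ?AC" using pref
    by (simp add: preferred_ext_def complete_ext_def admissible_def conflict_free_def)
  have PS: "?P \<subseteq> S" using EA Arg_memD by blast
  from max_consistent[OF PS prem_consistent[OF pref]] obtain T where
    T: "?P \<subseteq> T" "T \<subseteq> S" "\<not> inconsistent vd contr T"
    "\<forall>T'. T \<subseteq> T' \<and> T' \<subseteq> S \<and> \<not> inconsistent vd contr T' \<longrightarrow> T' = T" by (elim exE conjE)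
  let ?E = "{a \<in> ?AC. fst a \<subseteq> T}"
  have st: "stable_ext ?AC (attacks contr) ?E" using argT_stable[OF assms(1) T(2,3,4)] .
  from stable_preferred[OF st] have c1: "complete_ext ?AC (attacks contr) ?E"
    unfolding preferred_ext_def by (rule conjunct1)
  have c2: "E \<subseteq> ?E" using EA T(1) by blast
  from pref have mxE: "\<forall>E'. complete_ext ?AC (attacks contr) E' \<and> E \<subseteq> E' \<longrightarrow> E' = E"
    unfolding preferred_ext_def by (rule conjunct2)
  have "?E = E" using mxE[rule_format, OF conjI[OF c1 c2]] .
  with st show "stable_ext ?AC (attacks contr) E" by simp
qed

end
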